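(* Let $d\ge2$ and $\gamma>3/4$. Then $\Lambda_0(\gamma,d)>\frac{(d-1)(\gamma-\frac34)}{2(\gamma-\frac14)\,\mathsf N_0(\gamma)^{\frac{4\gamma}{4\gamma-1}}-2(\gamma-\frac34)}$.
   Context: $\mathsf N_0(\gamma)=2^{1-\frac3{4\gamma}}e^{\frac1{4\gamma}}\frac{(2\gamma-1)^{1-\frac1\gamma}}{(4\gamma-1)^{1-\frac3{4\gamma}}}\Big(\frac{\Gamma(2\gamma-\frac12)}{\Gamma(2\gamma-1)}\Big)^{\frac1{2\gamma}}$; $\beta_0=1-\frac1{4\gamma}$; $\mathsf x_0^*(\gamma)$ is the smallest root $x>\mathsf N_0^{1/\beta_0}$ of $4\gamma x^{\beta_0+1}-(8\gamma-3)\mathsf N_0x+(4\gamma-3)\mathsf N_0=0$ with $\mathsf N_0=\mathsf N_0(\gamma)$; $\Lambda_0(\gamma,d)=\frac{(d-1)(\gamma-3/4)}{\mathsf x_0^*(\gamma)}$. *)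

theory Defs
  imports "HOL-Analysis.Analysis"
begin

definition N0 :: "real \<Rightarrow> real" where
  "N0 \<gamma> = 2 powr (1 - 3 / (4 * \<gamma>)) * exp (1 / (4 * \<gamma>))
      * (2 * \<gamma> - 1) powr (1 - 1 / \<gamma>) / (4 * \<gamma> - 1) powr (1 - 3 / (4 * \<gamma>))
      * (Gamma (2 * \<gamma> - 1 / 2) / Gamma (2 * \<gamma> - 1)) powr (1 / (2 * \<gamma>))"

definition beta0 :: "real \<Rightarrow> real" where
  "beta0 \<gamma> = 1 - 1 / (4 * \<gamma>)"

definition x0star :: "real \<Rightarrow> real" where
  "x0star \<gamma> = Inf {x. x > N0 \<gamma> powr (1 / beta0 \<gamma>) \<and>
      4 * \<gamma> * x powr (beta0 \<gamma> + 1) - (8 * \<gamma> - 3) * N0 \<gamma> * x + (4 * \<gamma> - 3) * N0 \<gamma> = 0}"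

definition Lambda0 :: "real \<Rightarrow> nat \<Rightarrow> real" where
  "Lambda0 \<gamma> d = (real d - 1) * (\<gamma> - 3 / 4) / x0star \<gamma>"

end

theory Submission
  imports Defs
begin

lemma gamma_half_lower:
  fixes x :: real assumes x: "x > 0"
  shows "2 * ln x - ln (x + 1/2) \<le> 2 * ln (Gamma (x + 1/2) / Gamma x)"
proof -
  have "(ln \<circ> Gamma) ((1 - 1/2) *\<^sub>R (x + 1/2) + (1/2) *\<^sub>R (x + 3/2))
     \<le> (1 - 1/2) * (ln \<circ> Gamma) (x + 1/2) + (1/2) * (ln \<circ> Gamma) (x + 3/2)"
    by (rule convex_onD[OF log_convex_Gamma_real]) (use x in auto)
  moreover have "(1 - 1/2) *\<^sub>R (x + 1/2) + (1/2) *\<^sub>R (x + 3/2) = x + 1" by (simp add: field_simps)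
  ultimately have h: "ln (Gamma (x+1)) \<le> (ln (Gamma (x+1/2)) + ln (Gamma (x+3/2))) / 2" by simp
  have nx: "x \<notin> \<int>\<^sub>\<le>\<^sub>0" "x + 1/2 \<notin> \<int>\<^sub>\<le>\<^sub>0" using x by (auto elim!: nonpos_Ints_cases)
  have g1: "Gamma (x+1) = x * Gamma x" using Gamma_plus1[of x] nx by (simp add: add.commute)
  have g2: "Gamma (x+3/2) = (x+1/2) * Gamma (x+1/2)" using Gamma_plus1[of "x+1/2"] nx
    by (simp add: add.commute add.left_commute)
  have p1: "Gamma x > 0" "Gamma (x+1/2) > 0" using x by auto
  have "ln (Gamma (x+1)) = ln x + ln (Gamma x)" unfolding g1 by (rule ln_mult_pos[OF x p1(1)])
  moreover have "ln (Gamma (x+3/2)) = ln (x+1/2) + ln (Gamma (x+1/2))" unfolding g2 by (rule ln_mult_pos) (use x p1 in auto)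
  moreover have "ln (Gamma (x + 1/2) / Gamma x) = ln (Gamma (x+1/2)) - ln (Gamma x)"
    using p1 by (simp add: ln_div)
  ultimately show ?thesis using h[unfolded add_divide_distrib] by linarith
qed

lemma bern_strict:
  fixes t p :: real assumes t: "t > 1" and p: "p > 1"
  shows "t powr p > 1 + p * (t - 1)"
proof -
  let ?f = "\<lambda>t. t powr p - 1 - p * (t - 1)"
  have "?f 1 < ?f t"
  proof (rule DERIV_pos_imp_increasing_open[OF t])
    fix x :: real assume x: "1 < x" "x < t"
    have "DERIV ?f x :> p * x powr (p - 1) - 0 - p * (1 - 0)"
      using x by (auto intro!: derivative_eq_intros has_real_derivative_powr)
    moreover have "x powr (p - 1) > 1" using powr_less_mono2[of "p - 1" 1 x] x p by simp 
    ultimately show "\<exists>y. DERIV ?f x :> y \<and> 0 < y" using p by (intro exI[of _ "p * x powr (p - 1) - 0 - p * (1 - 0)"]) auto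
  next
    show "continuous_on {1..t} ?f" by (intro continuous_intros) auto
  qed
  then show ?thesis by simp
qed

lemma N0_gt_1:
  fixes g :: real assumes g: "g > 3/4"
  shows "N0 g > 1"
proof -
  define s where "s = 2*g - 1"
  have s: "s > 1/2" using g s_def by simp
  define R where "R = Gamma (2 * g - 1 / 2) / Gamma (2 * g - 1)"
  have R_eq: "R = Gamma (s + 1/2) / Gamma s" unfolding R_def s_def by (simp add: algebra_simps)
  have Rpos: "R > 0" unfolding R_eq using s by auto
  have hR: "2 * ln s - ln (s + 1/2) \<le> 2 * ln R" unfolding R_eq using gamma_half_lower s by simp
  have l4: "ln (4*g - 1) = ln 2 + ln (s + 1/2)"
  proof -
    have "4*g - 1 = 2 * (s + 1/2)" unfolding s_def by simp
    hence "ln (4*g - 1) = ln (2 * (s + 1/2))" by (simp only:)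
    also have "\<dots> = ln 2 + ln (s + 1/2)" by (rule ln_mult_pos) (use s in auto)
    finally show ?thesis .
  qed
  have pos: "(2::real) powr (1 - 3 / (4 * g)) > 0" "exp (1 / (4 * g)) > 0"
    "(2 * g - 1) powr (1 - 1 / g) > 0" "(4 * g - 1) powr (1 - 3 / (4 * g)) > 0"
    "R powr (1 / (2 * g)) > 0" using g Rpos by auto
  have lnN: "ln (N0 g) = (1 - 3 / (4 * g)) * ln 2 + 1 / (4 * g) + (1 - 1 / g) * ln s
     - (1 - 3 / (4 * g)) * ln (4*g - 1) + (1 / (2 * g)) * ln R"
    unfolding N0_def R_def[symmetric] using pos
    by (simp add: ln_mult ln_div s_def)
  have key: "4 * g * ln (N0 g) = 1 + (4*g-4) * ln s - (4*g-3) * ln (s + 1/2) + 2 * ln R"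
    unfolding lnN l4 using g by (simp add: field_simps)
  have ll: "ln (s + 1/2) - ln (s) < 1 / (2 * s)"
  proof -
    have "ln (s + 1/2) - ln s = ln (1 + 1 / (2 * s))"
    proof -
      have "ln (s + 1/2) - ln s = ln ((s + 1/2) / s)" using s by (simp add: ln_divide_pos)
      also have "(s + 1/2) / s = 1 + 1 / (2 * s)" using s by (simp add: field_simps)
      finally show ?thesis .
    qed
    thus ?thesis using ln_add_one_self_less_self[of "1 / (2 * s)"] s by simp
  qed
  have "(4 * g - 2) * (ln (s + 1/2) - ln s) < (4 * g - 2) * (1 / (2 * s))"
    using ll g by (intro mult_strict_left_mono) auto
  also have "(4 * g - 2) * (1 / (2 * s)) = 1" unfolding s_def using g by (simp add: field_simps)
  finally have "4 * g * ln (N0 g) > 0" unfolding key using hR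
    by (simp add: algebra_simps)
  hence "ln (N0 g) > 0" using g by (simp add: zero_less_mult_iff)
  moreover have "N0 g > 0" unfolding N0_def R_def[symmetric] using pos by simp
  ultimately show ?thesis using ln_gt_zero_iff by blast
qed


theorem proposition3:
  fixes \<gamma> :: real and d :: nat
  assumes "d \<ge> 2" and "\<gamma> > 3 / 4"
  shows "Lambda0 \<gamma> d > (real d - 1) * (\<gamma> - 3 / 4) /
    (2 * (\<gamma> - 1 / 4) * N0 \<gamma> powr (4 * \<gamma> / (4 * \<gamma> - 1)) - 2 * (\<gamma> - 3 / 4))"
proof -
  have g: "\<gamma> > 3/4" by fact
  define N where "N = N0 \<gamma>"
  define \<beta> where "\<beta> = beta0 \<gamma>"
  have N1: "N > 1" unfolding N_def using N0_gt_1[OF g] .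
  have b_def': "\<beta> = 1 - 1 / (4 * \<gamma>)" unfolding \<beta>_def beta0_def ..
  have bpos: "\<beta> > 0" unfolding b_def' using g by (simp add: field_simps)
  have pe: "1 / \<beta> = 4 * \<gamma> / (4 * \<gamma> - 1)" unfolding b_def' using g by (simp add: field_simps)
  define a where "a = N powr (1 / \<beta>)"
  have a1: "a > 1" unfolding a_def using powr_less_mono2[of "1 / \<beta>" 1 N] N1 bpos by simp 
  have apb: "a powr \<beta> = N" unfolding a_def using bpos N1 by (simp add: powr_powr)
  have apb1: "a powr (\<beta> + 1) = N * a" using a1 apb by (simp add: powr_add)
  define f where "f = (\<lambda>x. 4 * \<gamma> * x powr (\<beta> + 1) - (8 * \<gamma> - 3) * N * x + (4 * \<gamma> - 3) * N)"
  define B where "B = 2 * (\<gamma> - 1 / 4) * a - 2 * (\<gamma> - 3 / 4)"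
  have fa: "f a < 0"
  proof -
    have "f a = (4 * \<gamma> - 3) * N * (1 - a)" unfolding f_def apb1 by (simp add: algebra_simps)
    moreover have "(4 * \<gamma> - 3) * N > 0" using g N1 by simp
    ultimately show ?thesis using a1 by (simp add: mult_pos_neg)
  qed
  have Ba: "B - a = (2 * \<gamma> - 3 / 2) * (a - 1)" unfolding B_def by (simp add: field_simps)
  have "(2 * \<gamma> - 3 / 2) * (a - 1) > 0" using g a1 by (intro mult_pos_pos) auto
  hence aB: "a < B" using Ba by linarith
  define t where "t = B / a"
  have t1: "t > 1" unfolding t_def using aB a1 by simp
  have Bt: "B = a * t" unfolding t_def using a1 by simp
  have fB: "f B > 0"
  proof -
    have bern: "t powr (\<beta> + 1) > 1 + (\<beta> + 1) * (t - 1)" using bern_strict t1 bpos by simp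
    have "B powr (\<beta> + 1) = N * a * t powr (\<beta> + 1)" unfolding Bt using a1 t1 apb1
      by (simp add: powr_mult)
    hence "f B = N * (4 * \<gamma> * a * t powr (\<beta> + 1) - (8 * \<gamma> - 3) * a * t + (4 * \<gamma> - 3))"
      unfolding f_def by (simp add: Bt algebra_simps)
    moreover have "4 * \<gamma> * a * t powr (\<beta> + 1) > 4 * \<gamma> * a * (1 + (\<beta> + 1) * (t - 1))"
      using bern g a1 by simp
    moreover have "4 * \<gamma> * a * (1 + (\<beta> + 1) * (t - 1)) - (8 * \<gamma> - 3) * a * t + (4 * \<gamma> - 3) = 0"
    proof -
      have "4 * \<gamma> * (\<beta> + 1) = 8 * \<gamma> - 1" unfolding b_def' using g by (simp add: field_simps)
      hence e: "4 * \<gamma> * (\<beta> + 1) = 8 * \<gamma> - 1" .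
      have "4 * \<gamma> * a * (1 + (\<beta> + 1) * (t - 1)) = 4 * \<gamma> * a + (4 * \<gamma> * (\<beta> + 1)) * a * (t - 1)"
        by (simp add: algebra_simps)
      hence "4 * \<gamma> * a * (1 + (\<beta> + 1) * (t - 1)) = 4 * \<gamma> * a + (8 * \<gamma> - 1) * a * (t - 1)"
        by (simp only: e)
      hence "4 * \<gamma> * a * (1 + (\<beta> + 1) * (t - 1)) - (8 * \<gamma> - 3) * a * t + (4 * \<gamma> - 3)
          = 2 * (a * t) - (4 * \<gamma> - 1) * a + (4 * \<gamma> - 3)"
        by (subst (asm) eq_commute) (simp add: algebra_simps)
      moreover have "a * t = B" using Bt by simp
      moreover have "2 * B - (4 * \<gamma> - 1) * a + (4 * \<gamma> - 3) = 0" unfolding B_def by (simp add: algebra_simps)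
      ultimately show ?thesis by simp
    qed
    ultimately have "f B = N * (4 * \<gamma> * a * t powr (\<beta> + 1) - (8 * \<gamma> - 3) * a * t + (4 * \<gamma> - 3))"
      and "4 * \<gamma> * a * t powr (\<beta> + 1) - (8 * \<gamma> - 3) * a * t + (4 * \<gamma> - 3) > 0" by linarith+
    thus ?thesis using N1 by simp
  qed
  have cont: "continuous_on {a..B} f" unfolding f_def using a1
    by (intro continuous_intros) auto
  obtain r where r: "a \<le> r" "r \<le> B" "f r = 0"
    using IVT'[of f a 0 B, OF less_imp_le[OF fa] less_imp_le[OF fB] less_imp_le[OF aB] cont] by blast
  have ra: "a < r" using r fa by (cases "r = a") auto
  have rB: "r < B" using r fB by (cases "r = B") auto
  define S where "S = {x. x > N0 \<gamma> powr (1 / beta0 \<gamma>) \<and>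
      4 * \<gamma> * x powr (beta0 \<gamma> + 1) - (8 * \<gamma> - 3) * N0 \<gamma> * x + (4 * \<gamma> - 3) * N0 \<gamma> = 0}"
  have S_eq: "S = {x. x > a \<and> f x = 0}" unfolding S_def a_def f_def N_def \<beta>_def ..
  have x0: "x0star \<gamma> = Inf S" unfolding x0star_def S_def ..
  have rS: "r \<in> S" unfolding S_eq using ra r by simp
  have bdd: "bdd_below S" unfolding S_eq by (rule bdd_belowI[of _ a]) auto
  have x0le: "x0star \<gamma> \<le> r" unfolding x0 by (rule cInf_lower[OF rS bdd])
  have x0ge: "a \<le> x0star \<gamma>" unfolding x0 using rS by (intro cInf_greatest) (auto simp: S_eq)
  have Bexp: "2 * (\<gamma> - 1 / 4) * N0 \<gamma> powr (4 * \<gamma> / (4 * \<gamma> - 1)) - 2 * (\<gamma> - 3 / 4) = B"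
    unfolding B_def a_def pe[symmetric] N_def ..
  have c: "(real d - 1) * (\<gamma> - 3 / 4) > 0" using assms by simp
  have "(real d - 1) * (\<gamma> - 3 / 4) / B < (real d - 1) * (\<gamma> - 3 / 4) / x0star \<gamma>"
    by (rule divide_strict_left_mono) (use x0le rB x0ge a1 c in auto)
  thus ?thesis unfolding Bexp Lambda0_def .
qed

end
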